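(* Let $\bm L=(L_1,\dots,L_r)$ be linear functionals on complex Laurent polynomials with $L_j[w^k]=L_j[w^{-k}]$ for all $k\in\mathbb N$, $j=1,\dots,r$, and let $M_j$ be the linear functional on complex polynomials with $M_j[x^k]=L_j[(w+w^{-1})^k]$, $k\in\mathbb N$; $\bm M=(M_1,\dots,M_r)$. Suppose that $(\bm n;\bm n)$ and $(\bm n+\bm e_j;\bm n)$ are normal for $\bm L$ for all $\bm n\in\mathbb N^r$ and $j=1,\dots,r$. Then $\bm M$ is perfect, and for every $\bm n\in\mathbb N^r$ we have $\alpha_{\bm n;\bm n}\ne-1$ and $$P_{\bm n}(z+z^{-1})=\frac{1}{1+\alpha_{\bm n;\bm n}}\big(\Phi_{\bm n;\bm n}(z)+\Phi_{\bm n;\bm n}(1/z)\big),$$ and, for every $j$ with $n_j\ge1$, $$P_{\bm n}(z+z^{-1})=\Phi_{\bm n;\bm n-\bm e_j}(z)+\Phi_{\bm n;\bm n-\bm e_j}(1/z).$$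
   Context: Fix $r\ge1$; $\mathbb N=\{0,1,2,\dots\}$; $\bm e_j$ is the $j$-th standard unit vector; for $\bm v\in\mathbb Z^r$, $|\bm v|=v_1+\dots+v_r$ (signed). Let $c_{k,j}=L_j[w^{-k}]$. For $(\bm n;\bm m)\in\mathbb Z^r\times\mathbb Z^r$ with $n_j+m_j\ge0$ for all $j$ and $\bm n\ne-\bm m$, $T_{\bm n;\bm m}$ is the square matrix of size $|\bm n|+|\bm m|$ with rows indexed by $(j,k)$, $1\le j\le r$, $-m_j\le k\le n_j-1$ (ordered by $j$, then increasing $k$), columns indexed by $i=-|\bm m|,\dots,|\bm n|-1$, entries $c_{k-i,j}$; $T_{\bm n;-\bm n}:=1$; $(\bm n;\bm m)$ is normal (for $\bm L$) if $\det T_{\bm n;\bm m}\ne0$. For normal $(\bm n;\bm m)$, $\bm n\ne-\bm m$, $\Phi_{\bm n;\bm m}$ is the unique Laurent polynomial in $\operatorname{span}\{z^k\}_{k=-|\bm m|}^{|\bm n|}$ with $z^{|\bm n|}$-coefficient $1$ and $L_j[\Phi_{\bm n;\bm m}(w)w^{-k}]=0$ for $-m_j\le k\le n_j-1$, all $j$; $\Phi_{\bm 0;\bm 0}=1$; $\alpha_{\bm n;\bm m}$ is the $z^{-|\bm m|}$-coefficient of $\Phi_{\bm n;\bm m}$. For the system $\bm M$ on polynomials, a multi-index $\bm n\in\mathbb N^r$ is normal if there is a unique polynomial $P_{\bm n}$ of degree $|\bm n|$ with leading coefficient $1$ such that $M_j[P_{\bm n}(x)x^k]=0$ for $k=0,\dots,n_j-1$,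 $j=1,\dots,r$ (the type II multiple orthogonal polynomial); $\bm M$ is perfect if every $\bm n\in\mathbb N^r$ is normal. *)

theory Defs
  imports Complex_Main "HOL-Computational_Algebra.Polynomial" "Jordan_Normal_Form.Determinant"
begin

(* Conventions: indices j range over {0..<r} (shift of 1..r).
   A linear functional L_j on Laurent polynomials is given by its moments:
   L j k = L_j[w^k] for k :: int.  A Laurent polynomial is a finitely supported
   coefficient function int => complex.  Multi-indices are functions nat => int / nat,
   only the entries j < r matter. *)

definition lapp :: "(nat \<Rightarrow> int \<Rightarrow> complex) \<Rightarrow> nat \<Rightarrow> (int \<Rightarrow> complex) \<Rightarrow> complex" where
  "lapp L j f = (\<Sum>i\<in>{i. f i \<noteq> 0}. f i * L j i)"

(* coefficient function of the Laurent polynomial (w + w^{-1})^k *)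
fun wsym_pow :: "nat \<Rightarrow> int \<Rightarrow> complex" where
  "wsym_pow 0 = (\<lambda>i. if i = 0 then 1 else 0)"
| "wsym_pow (Suc k) = (\<lambda>i. wsym_pow k (i - 1) + wsym_pow k (i + 1))"

definition Mmom :: "(nat \<Rightarrow> int \<Rightarrow> complex) \<Rightarrow> nat \<Rightarrow> nat \<Rightarrow> complex" where
  "Mmom L j k = lapp L j (wsym_pow k)"

definition mapp :: "(nat \<Rightarrow> nat \<Rightarrow> complex) \<Rightarrow> nat \<Rightarrow> complex poly \<Rightarrow> complex" where
  "mapp M j p = (\<Sum>i\<le>degree p. coeff p i * M j i)"

definition is_mop :: "nat \<Rightarrow> (nat \<Rightarrow> nat \<Rightarrow> complex) \<Rightarrow> (nat \<Rightarrow> nat) \<Rightarrow> complex poly \<Rightarrow> bool" where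
  "is_mop r M n P \<longleftrightarrow> degree P = (\<Sum>j<r. n j) \<and> lead_coeff P = 1 \<and>
      (\<forall>j<r. \<forall>k<n j. mapp M j (P * monom 1 k) = 0)"

definition mnormal :: "nat \<Rightarrow> (nat \<Rightarrow> nat \<Rightarrow> complex) \<Rightarrow> (nat \<Rightarrow> nat) \<Rightarrow> bool" where
  "mnormal r M n \<longleftrightarrow> (\<exists>!P. is_mop r M n P)"

definition perfect :: "nat \<Rightarrow> (nat \<Rightarrow> nat \<Rightarrow> complex) \<Rightarrow> bool" where
  "perfect r M \<longleftrightarrow> (\<forall>n::nat \<Rightarrow> nat. (\<forall>j\<ge>r. n j = 0) \<longrightarrow> mnormal r M n)"

definition mop :: "nat \<Rightarrow> (nat \<Rightarrow> nat \<Rightarrow> complex) \<Rightarrow> (nat \<Rightarrow> nat) \<Rightarrow> complex poly" where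
  "mop r M n = (THE P. is_mop r M n P)"

definition vabs :: "nat \<Rightarrow> (nat \<Rightarrow> int) \<Rightarrow> int" where
  "vabs r v = (\<Sum>j<r. v j)"

definition Trows :: "nat \<Rightarrow> (nat \<Rightarrow> int) \<Rightarrow> (nat \<Rightarrow> int) \<Rightarrow> (nat \<times> int) list" where
  "Trows r n m = concat (map (\<lambda>j. map (\<lambda>k. (j, k)) [- m j .. n j - 1]) [0..<r])"

definition cc :: "(nat \<Rightarrow> int \<Rightarrow> complex) \<Rightarrow> int \<Rightarrow> nat \<Rightarrow> complex" where
  "cc L k j = L j (- k)"

(* T_{n;m}: column q corresponds to i = -|m| + q *)
definition Tmat :: "nat \<Rightarrow> (nat \<Rightarrow> int \<Rightarrow> complex) \<Rightarrow> (nat \<Rightarrow> int) \<Rightarrow> (nat \<Rightarrow> int) \<Rightarrow> complex mat" where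
  "Tmat r L n m = (let N = nat (vabs r n + vabs r m) in
     mat N N (\<lambda>(p, q). case Trows r n m ! p of (j, k) \<Rightarrow> cc L (k - (int q - vabs r m)) j))"

definition lnormal :: "nat \<Rightarrow> (nat \<Rightarrow> int \<Rightarrow> complex) \<Rightarrow> (nat \<Rightarrow> int) \<Rightarrow> (nat \<Rightarrow> int) \<Rightarrow> bool" where
  "lnormal r L n m \<longleftrightarrow> (\<forall>j<r. n j + m j \<ge> 0) \<and> det (Tmat r L n m) \<noteq> 0"

definition is_Phi :: "nat \<Rightarrow> (nat \<Rightarrow> int \<Rightarrow> complex) \<Rightarrow> (nat \<Rightarrow> int) \<Rightarrow> (nat \<Rightarrow> int) \<Rightarrow> (int \<Rightarrow> complex) \<Rightarrow> bool" where
  "is_Phi r L n m phi \<longleftrightarrow>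
     (\<forall>k. phi k \<noteq> 0 \<longrightarrow> - vabs r m \<le> k \<and> k \<le> vabs r n) \<and> phi (vabs r n) = 1 \<and>
     (\<forall>j<r. \<forall>k. - m j \<le> k \<and> k \<le> n j - 1 \<longrightarrow> lapp L j (\<lambda>i. phi (i + k)) = 0)"

definition Phi :: "nat \<Rightarrow> (nat \<Rightarrow> int \<Rightarrow> complex) \<Rightarrow> (nat \<Rightarrow> int) \<Rightarrow> (nat \<Rightarrow> int) \<Rightarrow> int \<Rightarrow> complex" where
  "Phi r L n m = (THE phi. is_Phi r L n m phi)"

definition leval :: "(int \<Rightarrow> complex) \<Rightarrow> complex \<Rightarrow> complex" where
  "leval f z = (\<Sum>k\<in>{k. f k \<noteq> 0}. f k * z powi k)"

definition alpha :: "nat \<Rightarrow> (nat \<Rightarrow> int \<Rightarrow> complex) \<Rightarrow> (nat \<Rightarrow> int) \<Rightarrow> (nat \<Rightarrow> int) \<Rightarrow> complex" where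
  "alpha r L n m = Phi r L n m (- vabs r m)"

end

theory Submission imports Defs begin


definition lb :: "int \<Rightarrow> int \<Rightarrow> (int \<Rightarrow> complex) \<Rightarrow> bool" where
  "lb a b f \<longleftrightarrow> (\<forall>i. f i \<noteq> 0 \<longrightarrow> a \<le> i \<and> i \<le> b)"

definition Xop :: "(int \<Rightarrow> complex) \<Rightarrow> int \<Rightarrow> complex" where
  "Xop f = (\<lambda>i. f (i - 1) + f (i + 1))"

definition lrefl :: "(int \<Rightarrow> complex) \<Rightarrow> int \<Rightarrow> complex" where
  "lrefl f = (\<lambda>i. f (- i))"

lemma lb_mono: "lb a b f \<Longrightarrow> a' \<le> a \<Longrightarrow> b \<le> b' \<Longrightarrow> lb a' b' f"
  unfolding lb_def by force

lemma lapp_eq: assumes "lb a b f" shows "lapp L j f = (\<Sum>i\<in>{a..b}. f i * L j i)"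
  unfolding lapp_def
proof (rule sum.mono_neutral_left)
  show "{i. f i \<noteq> 0} \<subseteq> {a..b}" using assms unfolding lb_def by auto
qed auto

lemma leval_eq: assumes "lb a b f" shows "leval f z = (\<Sum>i\<in>{a..b}. f i * z powi i)"
  unfolding leval_def
proof (rule sum.mono_neutral_left)
  show "{i. f i \<noteq> 0} \<subseteq> {a..b}" using assms unfolding lb_def by auto
qed auto

lemma sum_int_shift: "(\<Sum>t\<in>{a..b::int}. g t) = (\<Sum>s\<in>{a-c..b-c}. g (s + c))"
  by (rule sum.reindex_bij_witness[where i="\<lambda>t. t + c" and j="\<lambda>s. s - c"]) auto

lemma sum_int_neg: "(\<Sum>t\<in>{-M..M::int}. g t) = (\<Sum>t\<in>{-M..M}. g (- t))"
  by (rule sum.reindex_bij_witness[where i="\<lambda>t. - t" and j="\<lambda>s. - s"]) auto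

lemma W_lb: "lb (- int k) (int k) (wsym_pow k)"
proof (induction k)
  case 0 then show ?case by (simp add: lb_def)
next
  case (Suc k) show ?case unfolding lb_def
  proof (intro allI impI)
    fix i assume "wsym_pow (Suc k) i \<noteq> 0"
    then have "wsym_pow k (i-1) \<noteq> 0 \<or> wsym_pow k (i+1) \<noteq> 0" by auto
    then show "- int (Suc k) \<le> i \<and> i \<le> int (Suc k)" using Suc unfolding lb_def by force
  qed
qed

lemma W_sym: "wsym_pow k (- t) = wsym_pow k t"
proof (induction k arbitrary: t)
  case 0 then show ?case by simp
next
  case (Suc k)
  have e1: "- t - 1 = - (t + 1)" by simp
  have e2: "- t + 1 = - (t - 1)" by simp
  have 1: "wsym_pow k (- t - 1) = wsym_pow k (t + 1)" by (simp only: e1 Suc.IH)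
  have 2: "wsym_pow k (- t + 1) = wsym_pow k (t - 1)" by (simp only: e2 Suc.IH)
  show ?case using 1 2 by simp
qed

lemma W_top: "wsym_pow k (int k) = 1"
proof (induction k)
  case 0 then show ?case by simp
next
  case (Suc k)
  have "wsym_pow k (int k + 2) = 0" using W_lb[of k] unfolding lb_def by force
  then show ?case using Suc by (simp add: add.commute)
qed

lemma W_Suc: "wsym_pow (Suc k) = Xop (wsym_pow k)" by (simp add: Xop_def)

declare wsym_pow.simps(2)[simp del]

lemma Xop_binom:
  "(Xop ^^ k) f t = (\<Sum>i\<le>k. of_nat (k choose i) * f (t + 2 * int i - int k))"
proof (induction k arbitrary: t)
  case 0 then show ?case by simp
next
  case (Suc k)
  define F where "F = (\<lambda>i::nat. f (t + 2 * int i + 1 - int k))"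
  define h where "h = (\<lambda>i. of_nat (k choose i) * f (t - 1 + 2 * int i - int k))"
  have hS: "h (Suc k) = 0" unfolding h_def by simp
  have "(Xop ^^ k) f (t - 1) = (\<Sum>i\<le>k. h i)" using Suc.IH[of "t - 1"] unfolding h_def by simp
  also have "\<dots> = (\<Sum>i\<le>Suc k. h i)" by (simp only: sum.atMost_Suc hS) simp
  also have "\<dots> = h 0 + (\<Sum>i\<le>k. h (Suc i))" by (rule sum.atMost_Suc_shift)
  also have "h 0 = f (t - 1 - int k)" by (simp add: h_def)
  also have "(\<Sum>i\<le>k. h (Suc i)) = (\<Sum>i\<le>k. of_nat (k choose Suc i) * F i)"
  proof (rule sum.cong)
    fix i assume "i \<in> {..k}"
    have e: "t - 1 + 2 * int (Suc i) - int k = t + 2 * int i + 1 - int k" by simp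
    show "h (Suc i) = of_nat (k choose Suc i) * F i" unfolding h_def F_def e ..
  qed simp
  finally have A: "(Xop ^^ k) f (t - 1) = f (t - 1 - int k) + (\<Sum>i\<le>k. of_nat (k choose Suc i) * F i)" .
  have B: "(Xop ^^ k) f (t + 1) = (\<Sum>i\<le>k. of_nat (k choose i) * F i)"
  proof -
    have e: "\<And>i. t + 1 + 2 * int i - int k = t + 2 * int i + 1 - int k" by simp
    show ?thesis unfolding Suc.IH[of "t + 1"] F_def e ..
  qed
  have C: "\<And>i. of_nat (Suc k choose Suc i) * F i = of_nat (k choose i) * F i + of_nat (k choose Suc i) * F i"
    by (simp only: binomial_Suc_Suc of_nat_add distrib_right)
  have "(Xop ^^ Suc k) f t = (Xop ^^ k) f (t - 1) + (Xop ^^ k) f (t + 1)" unfolding funpow.simps o_def Xop_def ..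
  also have "\<dots> = f (t - 1 - int k) + (\<Sum>i\<le>k. of_nat (Suc k choose Suc i) * F i)"
    unfolding A B C sum.distrib by (simp only: ac_simps)
  also have "\<dots> = (\<Sum>i\<le>Suc k. of_nat (Suc k choose i) * f (t + 2 * int i - int (Suc k)))"
  proof -
    define g where "g = (\<lambda>i. of_nat (Suc k choose i) * f (t + 2 * int i - int (Suc k)))"
    have 1: "(\<Sum>i\<le>Suc k. g i) = g 0 + (\<Sum>i\<le>k. g (Suc i))" by (rule sum.atMost_Suc_shift)
    have 2: "g 0 = f (t - 1 - int k)" by (simp add: g_def) (rule arg_cong[where f=f], simp)
    have 3: "\<And>i. g (Suc i) = of_nat (Suc k choose Suc i) * F i"
    proof -
      fix i
      have e: "t + 2 * int (Suc i) - int (Suc k) = t + 2 * int i + 1 - int k" by simp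
      show "g (Suc i) = of_nat (Suc k choose Suc i) * F i" unfolding g_def F_def e ..
    qed
    show ?thesis by (simp only: g_def[symmetric] 1 2 3)
  qed
  finally show ?case .
qed


lemma Xop_lb: "lb a b f \<Longrightarrow> lb (a - 1) (b + 1) (Xop f)"
  unfolding lb_def Xop_def by (smt (verit) add_cancel_left_left)

lemma Xpow_lb: "lb a b f \<Longrightarrow> lb (a - int k) (b + int k) ((Xop ^^ k) f)"
proof (induction k)
  case 0 then show ?case by simp
next
  case (Suc k)
  have "lb (a - int k - 1) (b + int k + 1) ((Xop ^^ Suc k) f)"
    using Xop_lb[OF Suc.IH[OF Suc.prems]] by simp
  then show ?case by (simp add: algebra_simps)
qed

lemma shift_lb: "lb a b f \<Longrightarrow> lb (a - s) (b - s) (\<lambda>t. f (t + s))"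
  unfolding lb_def by force

definition lp :: "complex poly \<Rightarrow> int \<Rightarrow> complex" where
  "lp Q = (\<lambda>t. \<Sum>i\<le>degree Q. coeff Q i * wsym_pow i t)"

lemma lp_bound: "degree Q \<le> N \<Longrightarrow> lp Q t = (\<Sum>i\<le>N. coeff Q i * wsym_pow i t)"
  unfolding lp_def by (rule sum.mono_neutral_left) (auto simp: coeff_eq_0)

lemma lp_add: "lp (P + Q) t = lp P t + lp Q t"
proof -
  define N where "N = max (degree P) (degree Q)"
  have "degree (P + Q) \<le> N" unfolding N_def by (rule degree_add_le) auto
  then show ?thesis
    using lp_bound[of P N t] lp_bound[of Q N t] lp_bound[of "P + Q" N t]
    by (simp add: N_def sum.distrib distrib_right)
qed

lemma lp_smult: "lp (smult c P) t = c * lp P t"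
  using lp_bound[of "smult c P" "degree P" t] lp_bound[of P "degree P" t]
  by (simp add: sum_distrib_left mult.assoc)

lemma lp_monom: "lp (monom c k) t = c * wsym_pow k t"
proof -
  have "lp (monom c k) t = (\<Sum>i\<le>k. coeff (monom c k) i * wsym_pow i t)"
    by (rule lp_bound) (simp add: degree_monom_le)
  also have "\<dots> = (\<Sum>i\<le>k. if k = i then c * wsym_pow k t else 0)"
    by (rule sum.cong) (auto simp: coeff_monom)
  finally show ?thesis by simp
qed

lemma lp_pCons0: "lp (pCons 0 P) = Xop (lp P)"
proof
  fix t
  define d where "d = degree P"
  have "lp (pCons 0 P) t = (\<Sum>i\<le>Suc d. coeff (pCons 0 P) i * wsym_pow i t)"
    by (rule lp_bound) (simp add: d_def degree_pCons_le)
  also have "\<dots> = coeff (pCons 0 P) 0 * wsym_pow 0 t + (\<Sum>i\<le>d. coeff (pCons 0 P) (Suc i) * wsym_pow (Suc i) t)"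
    by (rule sum.atMost_Suc_shift)
  also have "\<dots> = (\<Sum>i\<le>d. coeff P i * wsym_pow i (t - 1)) + (\<Sum>i\<le>d. coeff P i * wsym_pow i (t + 1))"
    by (simp add: sum.distrib distrib_left wsym_pow.simps(2))
  also have "\<dots> = Xop (lp P) t"
    unfolding Xop_def using lp_bound[of P d "t - 1"] lp_bound[of P d "t + 1"] by (simp add: d_def)
  finally show "lp (pCons 0 P) t = Xop (lp P) t" .
qed

lemma lp_mult_monom: "lp (P * monom 1 k) = (Xop ^^ k) (lp P)"
proof (induction k)
  case 0 then show ?case by (simp add: one_pCons)
next
  case (Suc k)
  have "P * monom 1 (Suc k) = pCons 0 (P * monom 1 k)"
    by (simp add: monom_Suc mult_pCons_right)
  then show ?case using Suc by (simp add: lp_pCons0)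
qed

lemma lp_lb: assumes "degree Q \<le> N" shows "lb (- int N) (int N) (lp Q)"
  unfolding lb_def
proof (intro allI impI)
  fix t assume "lp Q t \<noteq> 0"
  then have "(\<Sum>i\<le>N. coeff Q i * wsym_pow i t) \<noteq> 0" using lp_bound[OF assms] by simp
  then obtain i where "i \<le> N" "wsym_pow i t \<noteq> 0"
    by (metis (no_types, lifting) atMost_iff mult_zero_right sum.neutral)
  then show "- int N \<le> t \<and> t \<le> int N" using W_lb[of i] unfolding lb_def by force
qed

lemma lp_sym: "lp Q (- t) = lp Q t"
  by (simp add: lp_def W_sym)

lemma lp_top: assumes "degree Q \<le> N" shows "lp Q (int N) = coeff Q N"
proof -
  have "lp Q (int N) = (\<Sum>i\<le>N. coeff Q i * wsym_pow i (int N))" by (rule lp_bound[OF assms])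
  also have "\<dots> = (\<Sum>i\<le>N. if i = N then coeff Q N else 0)"
  proof (rule sum.cong)
    fix i assume i: "i \<in> {..N}"
    show "coeff Q i * wsym_pow i (int N) = (if i = N then coeff Q N else 0)"
    proof (cases "i = N")
      case True then show ?thesis by (simp add: W_top)
    next
      case False
      then have "int N > int i" using i by auto
      then have "wsym_pow i (int N) = 0" using W_lb[of i] unfolding lb_def by force
      then show ?thesis using False by simp
    qed
  qed simp
  finally show ?thesis by simp
qed

lemma mapp_lp: "mapp (Mmom L) j P = lapp L j (lp P)"
proof -
  define d where "d = degree P"
  have "lapp L j (lp P) = (\<Sum>t\<in>{- int d..int d}. lp P t * L j t)"
    by (rule lapp_eq, rule lp_lb) (simp add: d_def)
  also have "\<dots> = (\<Sum>t\<in>{- int d..int d}. \<Sum>i\<le>d. coeff P i * (wsym_pow i t * L j t))"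
    by (simp add: lp_def d_def sum_distrib_right mult.assoc)
  also have "\<dots> = (\<Sum>i\<le>d. coeff P i * (\<Sum>t\<in>{- int d..int d}. wsym_pow i t * L j t))"
    by (subst sum.swap) (simp add: sum_distrib_left)
  also have "\<dots> = (\<Sum>i\<le>d. coeff P i * Mmom L j i)"
  proof (rule sum.cong)
    fix i assume "i \<in> {..d}"
    then have "lb (- int d) (int d) (wsym_pow i)" using W_lb[of i] by (rule_tac lb_mono) auto
    then show "coeff P i * (\<Sum>t\<in>{- int d..int d}. wsym_pow i t * L j t) = coeff P i * Mmom L j i"
      unfolding Mmom_def by (simp add: lapp_eq)
  qed simp
  finally show ?thesis by (simp add: mapp_def d_def)
qed

lemma mapp_monom: "mapp (Mmom L) j (P * monom 1 k) = lapp L j ((Xop ^^ k) (lp P))"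
  by (simp add: mapp_lp lp_mult_monom)


lemma lb_add: "lb a b f \<Longrightarrow> lb a b g \<Longrightarrow> lb a b (\<lambda>t. f t + g t)"
  unfolding lb_def by (metis add_0)

lemma lapp_add: "lb a b f \<Longrightarrow> lb a b g \<Longrightarrow> lapp L j (\<lambda>t. f t + g t) = lapp L j f + lapp L j g"
proof -
  assume f: "lb a b f" and g: "lb a b g"
  have fg: "lb a b (\<lambda>t. f t + g t)" using f g by (rule lb_add)
  show ?thesis unfolding lapp_eq[OF f] lapp_eq[OF g] lapp_eq[OF fg]
    by (simp add: sum.distrib distrib_right)
qed

lemma leval_add: "lb a b f \<Longrightarrow> lb a b g \<Longrightarrow> leval (\<lambda>t. f t + g t) z = leval f z + leval g z"
proof -
  assume f: "lb a b f" and g: "lb a b g"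
  have fg: "lb a b (\<lambda>t. f t + g t)" using f g by (rule lb_add)
  show ?thesis unfolding leval_eq[OF f] leval_eq[OF g] leval_eq[OF fg]
    by (simp add: sum.distrib distrib_right)
qed

lemma lapp_Xpow: assumes f: "lb (- M) M f"
  shows "lapp L j ((Xop ^^ k) f) = (\<Sum>i\<le>k. of_nat (k choose i) * lapp L j (\<lambda>t. f (t + (2 * int i - int k))))"
proof -
  define I where "I = {- M - int k .. M + int k}"
  have "lb (- M - int k) (M + int k) ((Xop ^^ k) f)" using Xpow_lb[OF f, of k] by simp
  then have "lapp L j ((Xop ^^ k) f) = (\<Sum>t\<in>I. (Xop ^^ k) f t * L j t)" unfolding I_def by (rule lapp_eq)
  also have "\<dots> = (\<Sum>t\<in>I. \<Sum>i\<le>k. of_nat (k choose i) * (f (t + (2 * int i - int k)) * L j t))"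
  proof (rule sum.cong)
    fix t
    have e: "\<And>i. t + 2 * int i - int k = t + (2 * int i - int k)" by simp
    show "(Xop ^^ k) f t * L j t = (\<Sum>i\<le>k. of_nat (k choose i) * (f (t + (2 * int i - int k)) * L j t))"
      unfolding Xop_binom e sum_distrib_right by (simp add: mult.assoc)
  qed simp
  also have "\<dots> = (\<Sum>i\<le>k. of_nat (k choose i) * (\<Sum>t\<in>I. f (t + (2 * int i - int k)) * L j t))"
    by (subst sum.swap) (simp add: sum_distrib_left)
  also have "\<dots> = (\<Sum>i\<le>k. of_nat (k choose i) * lapp L j (\<lambda>t. f (t + (2 * int i - int k))))"
  proof (rule sum.cong)
    fix i assume i: "i \<in> {..k}"
    have "lb (- M - (2 * int i - int k)) (M - (2 * int i - int k)) (\<lambda>t. f (t + (2 * int i - int k)))"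
      by (rule shift_lb[OF f])
    then have "lb (- M - int k) (M + int k) (\<lambda>t. f (t + (2 * int i - int k)))"
      by (rule lb_mono) (use i in auto)
    then show "of_nat (k choose i) * (\<Sum>t\<in>I. f (t + (2 * int i - int k)) * L j t) =
        of_nat (k choose i) * lapp L j (\<lambda>t. f (t + (2 * int i - int k)))"
      unfolding I_def by (simp add: lapp_eq)
  qed simp
  finally show ?thesis .
qed

lemma lapp_Xpow_zero: assumes f: "lb (- M) M f"
  and z: "\<forall>s. \<bar>s\<bar> \<le> int k \<longrightarrow> lapp L j (\<lambda>t. f (t + s)) = 0"
  shows "lapp L j ((Xop ^^ k) f) = 0"
proof -
  have "\<And>i. i \<in> {..k} \<Longrightarrow> lapp L j (\<lambda>t. f (t + (2 * int i - int k))) = 0"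
    using z by auto
  then show ?thesis unfolding lapp_Xpow[OF f] by simp
qed

lemma lapp_Xpow_edge: assumes f: "lb (- M) M f" and k: "k \<ge> 1"
  and z: "\<forall>s. \<bar>s\<bar> < int k \<longrightarrow> lapp L j (\<lambda>t. f (t + s)) = 0"
  shows "lapp L j ((Xop ^^ k) f) = lapp L j (\<lambda>t. f (t + - int k)) + lapp L j (\<lambda>t. f (t + int k))"
proof -
  define g where "g = (\<lambda>i. of_nat (k choose i) * lapp L j (\<lambda>t. f (t + (2 * int i - int k))))"
  have "(\<Sum>i\<le>k. g i) = (\<Sum>i\<in>{0, k}. g i)"
  proof (rule sum.mono_neutral_right)
    show "\<forall>i\<in>{..k} - {0, k}. g i = 0"
    proof
      fix i assume "i \<in> {..k} - {0, k}"
      then have "\<bar>2 * int i - int k\<bar> < int k" by auto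
      then show "g i = 0" unfolding g_def using z by simp
    qed
  qed auto
  also have "\<dots> = g 0 + g k"
  proof -
    have "0 \<notin> {k}" using k by simp
    then show ?thesis using sum.insert[of "{k}" 0 g] by simp
  qed
  also have "\<dots> = lapp L j (\<lambda>t. f (t + - int k)) + lapp L j (\<lambda>t. f (t + int k))"
  proof -
    have e1: "2 * int k - int k = int k" by simp
    have e2: "2 * int 0 - int k = - int k" by simp
    show ?thesis unfolding g_def e1 e2 by simp
  qed
  finally show ?thesis unfolding lapp_Xpow[OF f] g_def .
qed

lemma lapp_refl_shift: assumes symL: "\<forall>t. L j (- t) = L j t" and f: "lb (- M) M f"
  shows "lapp L j (\<lambda>t. lrefl f (t + s)) = lapp L j (\<lambda>t. f (t - s))"
proof -
  define K where "K = M + \<bar>s\<bar>"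
  have 1: "lb (- K) K (\<lambda>t. lrefl f (t + s))" using f unfolding lb_def lrefl_def K_def by force
  have 2: "lb (- K) K (\<lambda>t. f (t - s))" using f unfolding lb_def K_def by force
  have "lapp L j (\<lambda>t. lrefl f (t + s)) = (\<Sum>t\<in>{- K..K}. lrefl f (t + s) * L j t)"
    by (rule lapp_eq[OF 1])
  also have "\<dots> = (\<Sum>t\<in>{- K..K}. f (- (t + s)) * L j t)" by (simp add: lrefl_def)
  also have "\<dots> = (\<Sum>t\<in>{- K..K}. f (- (- t + s)) * L j (- t))" by (rule sum_int_neg)
  also have "\<dots> = (\<Sum>t\<in>{- K..K}. f (t - s) * L j t)" using symL by simp
  also have "\<dots> = lapp L j (\<lambda>t. f (t - s))" unfolding lapp_eq[OF 2] ..
  finally show ?thesis .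
qed

lemma leval_refl: assumes f: "lb (- M) M f" and z: "z \<noteq> 0"
  shows "leval f (1 / z) = leval (lrefl f) z"
proof -
  have 1: "lb (- M) M (lrefl f)" using f unfolding lb_def lrefl_def by force
  have "leval f (1 / z) = (\<Sum>t\<in>{- M..M}. f t * (1 / z) powi t)" by (rule leval_eq[OF f])
  also have "\<dots> = (\<Sum>t\<in>{- M..M}. f (- t) * (1 / z) powi (- t))" by (rule sum_int_neg)
  also have "\<dots> = (\<Sum>t\<in>{- M..M}. f (- t) * z powi t)"
    by (simp add: power_int_minus power_int_divide_distrib)
  also have "\<dots> = (\<Sum>t\<in>{- M..M}. lrefl f t * z powi t)" by (simp add: lrefl_def)
  also have "\<dots> = leval (lrefl f) z" by (rule leval_eq[OF 1, symmetric])
  finally show ?thesis .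
qed

lemma leval_Xop: assumes f: "lb (- M) M f" and z: "z \<noteq> 0"
  shows "leval (Xop f) z = (z + 1 / z) * leval f z"
proof -
  have 1: "lb (- M - 1) (M + 1) (Xop f)" using Xop_lb[OF f] by simp
  have A: "(\<Sum>t\<in>{- M - 1..M + 1}. f (t - 1) * z powi t) = z * leval f z"
  proof -
    have "(\<Sum>t\<in>{- M - 1..M + 1}. f (t - 1) * z powi t) = (\<Sum>t\<in>{- M - 1 - 1..M + 1 - 1}. f (t + 1 - 1) * z powi (t + 1))"
      by (rule sum_int_shift)
    also have "\<dots> = (\<Sum>t\<in>{- M - 2..M}. z * (f t * z powi t))"
      using z by (simp add: power_int_add algebra_simps)
    also have "\<dots> = z * leval f z"
      using leval_eq[OF lb_mono[OF f, of "- M - 2" M]] by (simp add: sum_distrib_left)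
    finally show ?thesis .
  qed
  have B: "(\<Sum>t\<in>{- M - 1..M + 1}. f (t + 1) * z powi t) = (1 / z) * leval f z"
  proof -
    have "(\<Sum>t\<in>{- M - 1..M + 1}. f (t + 1) * z powi t) = (\<Sum>t\<in>{- M - 1 - (- 1)..M + 1 - (- 1)}. f (t + (- 1) + 1) * z powi (t + (- 1)))"
      by (rule sum_int_shift)
    also have "\<dots> = (\<Sum>t\<in>{- M..M + 2}. (1 / z) * (f t * z powi t))"
      using z by (simp add: power_int_diff add.commute)
    also have "\<dots> = (1 / z) * leval f z"
      using leval_eq[OF lb_mono[OF f, of "- M" "M + 2"]] by (simp add: sum_distrib_left)
    finally show ?thesis .
  qed
  have "leval (Xop f) z = (\<Sum>t\<in>{- M - 1..M + 1}. f (t - 1) * z powi t) + (\<Sum>t\<in>{- M - 1..M + 1}. f (t + 1) * z powi t)"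
    unfolding leval_eq[OF 1] by (simp add: Xop_def sum.distrib distrib_right)
  also have "\<dots> = (z + 1 / z) * leval f z" unfolding A B by (simp add: distrib_right)
  finally show ?thesis .
qed

lemma leval_W: assumes z: "z \<noteq> 0" shows "leval (wsym_pow k) z = (z + 1 / z) ^ k"
proof (induction k)
  case 0
  have "lb 0 0 (wsym_pow 0)" by (simp add: lb_def)
  then show ?case by (simp add: leval_eq)
next
  case (Suc k)
  then show ?case using leval_Xop[OF W_lb[of k] z] by (simp only: W_Suc power_Suc)
qed

lemma leval_lp: assumes z: "z \<noteq> 0" shows "leval (lp Q) z = poly Q (z + 1 / z)"
proof -
  define d where "d = degree Q"
  have "leval (lp Q) z = (\<Sum>t\<in>{- int d..int d}. lp Q t * z powi t)"
    by (rule leval_eq, rule lp_lb) (simp add: d_def)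
  also have "\<dots> = (\<Sum>t\<in>{- int d..int d}. \<Sum>i\<le>d. coeff Q i * (wsym_pow i t * z powi t))"
    by (simp add: lp_def d_def sum_distrib_right mult.assoc)
  also have "\<dots> = (\<Sum>i\<le>d. coeff Q i * (\<Sum>t\<in>{- int d..int d}. wsym_pow i t * z powi t))"
    by (subst sum.swap) (simp add: sum_distrib_left)
  also have "\<dots> = (\<Sum>i\<le>d. coeff Q i * (z + 1 / z) ^ i)"
  proof (rule sum.cong)
    fix i assume "i \<in> {..d}"
    then have "lb (- int d) (int d) (wsym_pow i)" using W_lb[of i] by (rule_tac lb_mono) auto
    then show "coeff Q i * (\<Sum>t\<in>{- int d..int d}. wsym_pow i t * z powi t) = coeff Q i * (z + 1 / z) ^ i"
      using leval_W[OF z, of i] by (simp add: leval_eq)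
  qed simp
  finally show ?thesis by (simp add: poly_altdef d_def)
qed

lemma sym_to_poly: "lb (- int N) (int N) S \<Longrightarrow> (\<forall>t. S (- t) = S t) \<Longrightarrow> \<exists>Q. degree Q \<le> N \<and> lp Q = S"
proof (induction N arbitrary: S)
  case 0
  show ?case
  proof (intro exI conjI)
    show "degree [:S 0:] \<le> 0" by simp
    show "lp [:S 0:] = S"
    proof
      fix t
      show "lp [:S 0:] t = S t" using "0.prems"(1) unfolding lp_def lb_def by (cases "t = 0") auto
    qed
  qed
next
  case (Suc N)
  define c where "c = S (int (Suc N))"
  define S' where "S' = (\<lambda>t. S t - c * wsym_pow (Suc N) t)"
  have lbS': "lb (- int N) (int N) S'"
    unfolding lb_def
  proof (intro allI impI)
    fix t assume t: "S' t \<noteq> 0"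
    have "S t \<noteq> 0 \<or> wsym_pow (Suc N) t \<noteq> 0" using t unfolding S'_def by auto
    then have b: "\<bar>t\<bar> \<le> int (Suc N)" using Suc.prems(1) W_lb[of "Suc N"] unfolding lb_def by force
    show "- int N \<le> t \<and> t \<le> int N"
    proof (rule ccontr)
      assume "\<not> (- int N \<le> t \<and> t \<le> int N)"
      then have "t = int (Suc N) \<or> t = - int (Suc N)" using b by auto
      then show False
      proof
        assume tt: "t = int (Suc N)"
        have w: "wsym_pow (Suc N) t = 1" unfolding tt by (rule W_top)
        show False using t w unfolding S'_def c_def tt by simp
      next
        assume tt: "t = - int (Suc N)"
        have "wsym_pow (Suc N) t = 1" using W_top[of "Suc N"] W_sym[of "Suc N" "int (Suc N)"] tt by simp
        moreover have "S t = c" unfolding c_def tt by (rule Suc.prems(2)[rule_format])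
        ultimately show False using t unfolding S'_def by simp
      qed
    qed
  qed
  have symS': "\<forall>t. S' (- t) = S' t" using Suc.prems(2) unfolding S'_def by (simp add: W_sym)
  obtain Q' where Q': "degree Q' \<le> N" "lp Q' = S'" using Suc.IH[OF lbS' symS'] by blast
  show ?case
  proof (intro exI conjI)
    show "degree (Q' + monom c (Suc N)) \<le> Suc N"
      using Q'(1) by (meson degree_add_le degree_monom_le le_SucI)
    show "lp (Q' + monom c (Suc N)) = S"
    proof
      fix t show "lp (Q' + monom c (Suc N)) t = S t"
        unfolding lp_add lp_monom Q'(2) S'_def by simp
    qed
  qed
qed


lemma lapp_diff: "lb a b f \<Longrightarrow> lb a b g \<Longrightarrow> lapp L j (\<lambda>t. f t - g t) = lapp L j f - lapp L j g"
proof -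
  assume f: "lb a b f" and g: "lb a b g"
  have fg: "lb a b (\<lambda>t. f t - g t)" using f g unfolding lb_def by (metis diff_zero)
  show ?thesis unfolding lapp_eq[OF f] lapp_eq[OF g] lapp_eq[OF fg]
    by (simp add: sum_subtractf left_diff_distrib)
qed

lemma lapp_shift_eq: assumes f: "lb a b f"
  shows "lapp L j (\<lambda>i. f (i + k)) = (\<Sum>l\<in>{a..b}. f l * L j (l - k))"
proof -
  have "lapp L j (\<lambda>i. f (i + k)) = (\<Sum>i\<in>{a - k..b - k}. f (i + k) * L j i)"
    by (rule lapp_eq[OF shift_lb[OF f]])
  also have "\<dots> = (\<Sum>l\<in>{a - k - (- k)..b - k - (- k)}. f (l + - k + k) * L j (l + - k))"
    by (rule sum_int_shift)
  also have "\<dots> = (\<Sum>l\<in>{a..b}. f l * L j (l - k))" by simp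
  finally show ?thesis .
qed

lemma trows_set: "set (Trows r n m) = {(j, k). j < r \<and> - m j \<le> k \<and> k \<le> n j - 1}"
  unfolding Trows_def by auto

lemma trows_length: assumes "\<forall>j<r. n j + m j \<ge> 0"
  shows "length (Trows r n m) = nat (vabs r n + vabs r m)"
proof -
  have "length (Trows r n m) = (\<Sum>j\<in>{0..<r}. nat (n j + m j))"
    unfolding Trows_def length_concat map_map
    by (subst sum_list_distinct_conv_sum_set) (auto simp: o_def algebra_simps)
  also have "\<dots> = nat (\<Sum>j\<in>{0..<r}. (n j + m j))"
  proof -
    have "int (\<Sum>j\<in>{0..<r}. nat (n j + m j)) = (\<Sum>j\<in>{0..<r}. (n j + m j))"
      using assms by (simp add: of_nat_sum)
    then show ?thesis by linarith
  qed
  also have "\<dots> = nat (vabs r n + vabs r m)"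
    unfolding vabs_def by (simp add: sum.distrib atLeast0LessThan)
  finally show ?thesis .
qed

lemma Tmat_carrier: "Tmat r L n m \<in> carrier_mat (nat (vabs r n + vabs r m)) (nat (vabs r n + vabs r m))"
  unfolding Tmat_def Let_def by simp

lemma Tmat_mult:
  assumes p: "p < nat (vabs r n + vabs r m)" and jk: "Trows r n m ! p = (j, k)"
    and f: "lb (- vabs r m) (vabs r n - 1) f"
  shows "(Tmat r L n m *\<^sub>v vec (nat (vabs r n + vabs r m)) (\<lambda>q. f (int q - vabs r m))) $ p
       = lapp L j (\<lambda>i. f (i + k))"
proof -
  define A where "A = vabs r m"
  define B where "B = vabs r n"
  define N where "N = nat (B + A)"
  have "(Tmat r L n m *\<^sub>v vec N (\<lambda>q. f (int q - A))) $ p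
      = (\<Sum>q\<in>{0..<N}. cc L (k - (int q - A)) j * f (int q - A))"
    using p jk unfolding Tmat_def Let_def A_def B_def N_def
    by (simp add: scalar_prod_def)
  also have "\<dots> = (\<Sum>l\<in>{- A..B - 1}. f l * L j (l - k))"
  proof (rule sum.reindex_bij_witness[where i = "\<lambda>l. nat (l + A)" and j = "\<lambda>q. int q - A"])
    fix q assume "q \<in> {0..<N}"
    then show "nat (int q - A + A) = q" "int q - A \<in> {- A..B - 1}" using N_def by auto
    show "f (int q - A) * L j (int q - A - k) = cc L (k - (int q - A)) j * f (int q - A)"
      by (simp add: cc_def)
  next
    fix l assume "l \<in> {- A..B - 1}"
    then show "int (nat (l + A)) - A = l" "nat (l + A) \<in> {0..<N}" using N_def by auto
  qed
  also have "\<dots> = lapp L j (\<lambda>i. f (i + k))"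
    using lapp_shift_eq[OF f] unfolding A_def B_def by simp
  finally show ?thesis unfolding A_def B_def N_def .
qed

lemma ker_triv:
  assumes ln: "lnormal r L n m"
    and f: "lb (- vabs r m) (vabs r n - 1) f"
    and orth: "\<forall>j<r. \<forall>k. - m j \<le> k \<and> k \<le> n j - 1 \<longrightarrow> lapp L j (\<lambda>i. f (i + k)) = 0"
  shows "f = (\<lambda>_. 0)"
proof -
  define A where "A = vabs r m"
  define B where "B = vabs r n"
  define N where "N = nat (B + A)"
  have nn: "\<forall>j<r. n j + m j \<ge> 0" and dt: "det (Tmat r L n m) \<noteq> 0"
    using ln unfolding lnormal_def by auto
  have len: "length (Trows r n m) = N" using trows_length[OF nn] unfolding N_def A_def B_def .
  define v where "v = vec N (\<lambda>q. f (int q - A))"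
  have car: "Tmat r L n m \<in> carrier_mat N N" using Tmat_carrier unfolding N_def A_def B_def .
  have "Tmat r L n m *\<^sub>v v = 0\<^sub>v N"
  proof (rule eq_vecI)
    show "dim_vec (Tmat r L n m *\<^sub>v v) = dim_vec (0\<^sub>v N)" using car by simp
    fix p assume "p < dim_vec (0\<^sub>v N)"
    then have p: "p < N" by simp
    obtain j k where jk: "Trows r n m ! p = (j, k)" by fastforce
    have "(j, k) \<in> set (Trows r n m)" using jk p len by (metis nth_mem)
    then have c: "j < r" "- m j \<le> k" "k \<le> n j - 1" unfolding trows_set by auto
    have "(Tmat r L n m *\<^sub>v v) $ p = lapp L j (\<lambda>i. f (i + k))"
      unfolding v_def N_def A_def B_def by (rule Tmat_mult[OF _ jk f]) (use p N_def A_def B_def in simp)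
    also have "\<dots> = 0" using orth c by auto
    finally show "(Tmat r L n m *\<^sub>v v) $ p = 0\<^sub>v N $ p" using p by simp
  qed
  moreover have "v \<in> carrier_vec N" unfolding v_def by simp
  ultimately have v0: "v = 0\<^sub>v N" using det_0_iff_vec_prod_zero[OF car] dt by blast
  show ?thesis
  proof
    fix i
    show "f i = 0"
    proof (rule ccontr)
      assume fi: "f i \<noteq> 0"
      then have i: "- A \<le> i" "i \<le> B - 1" using f unfolding lb_def A_def B_def by auto
      then have q: "nat (i + A) < N" unfolding N_def by auto
      have "v $ nat (i + A) = f i" unfolding v_def using q i by simp
      then show False using v0 q fi by simp
    qed
  qed
qed

lemma sol_exists:
  assumes ln: "lnormal r L n m"
  shows "\<exists>f. lb (- vabs r m) (vabs r n - 1) f \<and>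
     (\<forall>j<r. \<forall>k. - m j \<le> k \<and> k \<le> n j - 1 \<longrightarrow> lapp L j (\<lambda>i. f (i + k)) = - L j (vabs r n - k))"
proof -
  define A where "A = vabs r m"
  define B where "B = vabs r n"
  define N where "N = nat (B + A)"
  have nn: "\<forall>j<r. n j + m j \<ge> 0" and dt: "det (Tmat r L n m) \<noteq> 0"
    using ln unfolding lnormal_def by auto
  have len: "length (Trows r n m) = N" using trows_length[OF nn] unfolding N_def A_def B_def .
  have car: "Tmat r L n m \<in> carrier_mat N N" using Tmat_carrier unfolding N_def A_def B_def .
  have "Tmat r L n m \<in> Units (ring_mat TYPE(complex) N ())"
    by (rule det_non_zero_imp_unit[OF car dt])
  then obtain Bi where Bi: "Bi \<in> carrier_mat N N" "Tmat r L n m * Bi = 1\<^sub>m N"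
    unfolding Units_def ring_mat_def by auto
  define b where "b = vec N (\<lambda>p. case Trows r n m ! p of (j, k) \<Rightarrow> - L j (B - k))"
  define v where "v = Bi *\<^sub>v b"
  have Tv: "Tmat r L n m *\<^sub>v v = b"
    unfolding v_def using Bi car by (simp add: assoc_mult_mat_vec[symmetric] b_def)
  have vc: "v \<in> carrier_vec N" unfolding v_def using Bi(1) unfolding carrier_vec_def carrier_mat_def by simp
  define f where "f = (\<lambda>i. if - A \<le> i \<and> i \<le> B - 1 then v $ nat (i + A) else 0)"
  have flb: "lb (- A) (B - 1) f" unfolding lb_def f_def by auto
  have vf: "vec N (\<lambda>q. f (int q - A)) = v"
  proof (rule eq_vecI)
    show "dim_vec (vec N (\<lambda>q. f (int q - A))) = dim_vec v" using vc by simp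
    fix q assume "q < dim_vec v"
    then have "q < N" using vc by simp
    then show "vec N (\<lambda>q. f (int q - A)) $ q = v $ q" unfolding f_def N_def by auto
  qed
  show ?thesis
  proof (intro exI conjI allI impI)
    show "lb (- vabs r m) (vabs r n - 1) f" using flb unfolding A_def B_def .
    fix j k assume j: "j < r" and k: "- m j \<le> k \<and> k \<le> n j - 1"
    then have "(j, k) \<in> set (Trows r n m)" unfolding trows_set by auto
    then obtain p where p: "p < length (Trows r n m)" "Trows r n m ! p = (j, k)"
      by (metis in_set_conv_nth)
    have pN: "p < nat (vabs r n + vabs r m)" using p len unfolding N_def A_def B_def by simp
    have "lapp L j (\<lambda>i. f (i + k)) = (Tmat r L n m *\<^sub>v vec N (\<lambda>q. f (int q - A))) $ p"
      unfolding N_def A_def B_def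
      by (rule Tmat_mult[OF pN p(2), symmetric]) (use flb A_def B_def in simp)
    also have "\<dots> = b $ p" unfolding vf Tv ..
    also have "\<dots> = - L j (vabs r n - k)" unfolding b_def B_def using p len by simp
    finally show "lapp L j (\<lambda>i. f (i + k)) = - L j (vabs r n - k)" .
  qed
qed


lemma is_Phi_lb: "is_Phi r L n m phi \<Longrightarrow> lb (- vabs r m) (vabs r n) phi"
  unfolding is_Phi_def lb_def by auto

lemma lapp_delta: "lapp L j (\<lambda>i. if i + k = B then 1 else 0) = L j (B - k)"
proof -
  have "lb (B - k) (B - k) (\<lambda>i. if i + k = B then 1 else 0 :: complex)" unfolding lb_def by auto
  then show ?thesis by (simp add: lapp_eq)
qed

lemma Phi_exists: assumes ln: "lnormal r L n m" shows "\<exists>phi. is_Phi r L n m phi"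
proof -
  obtain f where f: "lb (- vabs r m) (vabs r n - 1) f"
    and fo: "\<forall>j<r. \<forall>k. - m j \<le> k \<and> k \<le> n j - 1 \<longrightarrow> lapp L j (\<lambda>i. f (i + k)) = - L j (vabs r n - k)"
    using sol_exists[OF ln] by blast
  have nn: "\<forall>j<r. n j + m j \<ge> 0" using ln unfolding lnormal_def by auto
  have "0 \<le> (\<Sum>j<r. n j + m j)" using nn by (intro sum_nonneg) auto
  then have AB: "- vabs r m \<le> vabs r n" unfolding vabs_def by (simp add: sum.distrib)
  define phi where "phi = (\<lambda>i. f i + (if i = vabs r n then 1 else 0))"
  show ?thesis
  proof (intro exI)
    show "is_Phi r L n m phi" unfolding is_Phi_def
    proof (intro conjI)
      show "\<forall>k. phi k \<noteq> 0 \<longrightarrow> - vabs r m \<le> k \<and> k \<le> vabs r n"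
      proof (intro allI impI)
        fix k assume "phi k \<noteq> 0"
        then have "f k \<noteq> 0 \<or> k = vabs r n" unfolding phi_def by (auto split: if_splits)
        then show "- vabs r m \<le> k \<and> k \<le> vabs r n" using f AB unfolding lb_def by auto
      qed
    next
      have "f (vabs r n) = 0" using f unfolding lb_def by force
      then show "phi (vabs r n) = 1" unfolding phi_def by simp
    next
      show "\<forall>j<r. \<forall>k. - m j \<le> k \<and> k \<le> n j - 1 \<longrightarrow> lapp L j (\<lambda>i. phi (i + k)) = 0"
      proof (intro allI impI)
      fix j k assume j: "j < r" and k: "- m j \<le> k \<and> k \<le> n j - 1"
      define K where "K = \<bar>k\<bar> + \<bar>vabs r m\<bar> + \<bar>vabs r n\<bar> + 1"
      have l1: "lb (- K) K (\<lambda>i. f (i + k))" using shift_lb[OF f, of k] by (rule lb_mono) (auto simp: K_def)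
      have l2: "lb (- K) K (\<lambda>i. if i + k = vabs r n then 1 else 0 :: complex)"
        unfolding lb_def K_def by auto
      have "lapp L j (\<lambda>i. phi (i + k)) = lapp L j (\<lambda>i. f (i + k)) + lapp L j (\<lambda>i. if i + k = vabs r n then 1 else 0)"
        unfolding phi_def by (rule lapp_add[OF l1 l2])
      also have "\<dots> = 0" using fo j k by (simp add: lapp_delta)
      finally show "lapp L j (\<lambda>i. phi (i + k)) = 0" .
      qed
    qed
  qed
qed

lemma Phi_unique: assumes ln: "lnormal r L n m" and p1: "is_Phi r L n m p1" and p2: "is_Phi r L n m p2"
  shows "p1 = p2"
proof -
  define d where "d = (\<lambda>t. p1 t - p2 t)"
  have d: "lb (- vabs r m) (vabs r n - 1) d"
    using p1 p2 unfolding d_def is_Phi_def lb_def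
    by (metis diff_self diff_zero order.order_iff_strict zle_diff1_eq)
  have "d = (\<lambda>_. 0)"
  proof (rule ker_triv[OF ln d], intro allI impI)
    fix j k assume j: "j < r" and k: "- m j \<le> k \<and> k \<le> n j - 1"
    have l1: "lb (- vabs r m - k) (vabs r n - k) (\<lambda>i. p1 (i + k))" by (rule shift_lb[OF is_Phi_lb[OF p1]])
    have l2: "lb (- vabs r m - k) (vabs r n - k) (\<lambda>i. p2 (i + k))" by (rule shift_lb[OF is_Phi_lb[OF p2]])
    have "lapp L j (\<lambda>i. d (i + k)) = lapp L j (\<lambda>i. p1 (i + k)) - lapp L j (\<lambda>i. p2 (i + k))"
      unfolding d_def by (rule lapp_diff[OF l1 l2])
    also have "\<dots> = 0" using p1 p2 j k unfolding is_Phi_def by simp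
    finally show "lapp L j (\<lambda>i. d (i + k)) = 0" .
  qed
  then have z: "\<And>t. p1 t - p2 t = 0" unfolding d_def by meson
  show ?thesis
  proof
    fix t show "p1 t = p2 t" using z[of t] by simp
  qed
qed

lemma Phi_is: assumes ln: "lnormal r L n m" shows "is_Phi r L n m (Phi r L n m)"
proof -
  have "\<exists>!phi. is_Phi r L n m phi" using Phi_exists[OF ln] Phi_unique[OF ln] by blast
  then show ?thesis unfolding Phi_def by (rule theI')
qed

lemma mapp_bound: "degree p \<le> N \<Longrightarrow> mapp M j p = (\<Sum>i\<le>N. coeff p i * M j i)"
  unfolding mapp_def by (rule sum.mono_neutral_left) (auto simp: coeff_eq_0)

lemma mapp_lin: "mapp M j (smult a p - smult b q) = a * mapp M j p - b * mapp M j q"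
proof -
  define N where "N = max (degree p) (degree q)"
  have "degree (smult a p - smult b q) \<le> N" unfolding N_def
    by (meson degree_diff_le degree_smult_le le_trans max.cobounded1 max.cobounded2)
  then show ?thesis
    using mapp_bound[of p N M j] mapp_bound[of q N M j] mapp_bound[of "smult a p - smult b q" N M j]
    by (simp add: N_def sum_subtractf sum_distrib_left algebra_simps)
qed

definition morth :: "nat \<Rightarrow> (nat \<Rightarrow> nat \<Rightarrow> complex) \<Rightarrow> (nat \<Rightarrow> nat) \<Rightarrow> complex poly \<Rightarrow> bool" where
  "morth r M n P \<longleftrightarrow> (\<forall>j<r. \<forall>k<n j. mapp M j (P * monom 1 k) = 0)"

lemma morth_lin: "morth r M n p \<Longrightarrow> morth r M n q \<Longrightarrow> morth r M n (smult a p - smult b q)"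
  unfolding morth_def
proof (intro allI impI)
  fix j k assume p: "\<forall>j<r. \<forall>k<n j. mapp M j (p * monom 1 k) = 0"
    and q: "\<forall>j<r. \<forall>k<n j. mapp M j (q * monom 1 k) = 0" and j: "j < r" and k: "k < n j"
  have "(smult a p - smult b q) * monom 1 k = smult a (p * monom 1 k) - smult b (q * monom 1 k)"
    by (simp add: algebra_simps)
  then show "mapp M j ((smult a p - smult b q) * monom 1 k) = 0"
    using p q j k by (simp add: mapp_lin)
qed

lemma coeff_top_zero: "degree P \<le> N \<Longrightarrow> coeff P N = 0 \<Longrightarrow> P = 0 \<or> degree P < N"
  by (metis le_neq_implies_less leading_coeff_0_iff)

lemma vabs_int: "vabs r (\<lambda>i. int (n i)) = int (\<Sum>j<r. n j)"
  unfolding vabs_def by (simp add: of_nat_sum)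

lemma vabs_upd: "j < r \<Longrightarrow> vabs r (v(j := v j + c)) = vabs r v + c"
proof -
  assume j: "j < r"
  have "vabs r (v(j := v j + c)) = (\<Sum>i<r. v i + (if i = j then c else 0))"
    unfolding vabs_def by (rule sum.cong) auto
  also have "\<dots> = vabs r v + c" using j by (simp add: sum.distrib vabs_def)
  finally show ?thesis .
qed


lemma lapp_symz: assumes symL: "\<forall>t. L j (- t) = L j t" and f: "lb (- M) M f"
  shows "lapp L j (\<lambda>t. f (t + s) + f (- (t + s))) = lapp L j (\<lambda>t. f (t + s)) + lapp L j (\<lambda>t. f (t + - s))"
proof -
  define K where "K = M + \<bar>s\<bar>"
  have l1: "lb (- K) K (\<lambda>t. f (t + s))" using f unfolding lb_def K_def by force
  have l2: "lb (- K) K (\<lambda>t. lrefl f (t + s))" using f unfolding lb_def lrefl_def K_def by force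
  have "lapp L j (\<lambda>t. f (t + s) + f (- (t + s))) = lapp L j (\<lambda>t. f (t + s) + lrefl f (t + s))"
    unfolding lrefl_def ..
  also have "\<dots> = lapp L j (\<lambda>t. f (t + s)) + lapp L j (\<lambda>t. lrefl f (t + s))" by (rule lapp_add[OF l1 l2])
  also have "lapp L j (\<lambda>t. lrefl f (t + s)) = lapp L j (\<lambda>t. f (t - s))" by (rule lapp_refl_shift, rule symL, rule f)
  finally show ?thesis by simp
qed

lemma leval_sym: assumes f: "lb (- M) M f" and z: "z \<noteq> 0"
  shows "leval (\<lambda>t. f t + f (- t)) z = leval f z + leval f (1 / z)"
proof -
  have l2: "lb (- M) M (lrefl f)" using f unfolding lb_def lrefl_def by force
  have "leval (\<lambda>t. f t + f (- t)) z = leval (\<lambda>t. f t + lrefl f t) z" unfolding lrefl_def ..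
  also have "\<dots> = leval f z + leval (lrefl f) z" by (rule leval_add[OF f l2])
  also have "leval (lrefl f) z = leval f (1 / z)" by (rule leval_refl[OF f z, symmetric])
  finally show ?thesis .
qed

lemma S_to_Q:
  assumes S: "lb (- int N) (int N) S" and symS: "\<forall>t. S (- t) = S t"
    and orth: "\<forall>i<r. \<forall>s. \<bar>s\<bar> \<le> int (n i) - 1 \<longrightarrow> lapp L i (\<lambda>t. S (t + s)) = 0"
  shows "\<exists>Q. degree Q \<le> N \<and> lp Q = S \<and> coeff Q N = S (int N) \<and> morth r (Mmom L) n Q"
proof -
  obtain Q where Q: "degree Q \<le> N" "lp Q = S" using sym_to_poly[OF S symS] by blast
  have "morth r (Mmom L) n Q" unfolding morth_def
  proof (intro allI impI)
    fix i k assume i: "i < r" and k: "k < n i"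
    have "lapp L i ((Xop ^^ k) S) = 0"
    proof (rule lapp_Xpow_zero[OF S], intro allI impI)
      fix s assume "\<bar>s\<bar> \<le> int k"
      then show "lapp L i (\<lambda>t. S (t + s)) = 0" using orth i k by auto
    qed
    then show "mapp (Mmom L) i (Q * monom 1 k) = 0" by (simp add: mapp_monom Q(2))
  qed
  moreover have "coeff Q N = S (int N)" using lp_top[OF Q(1)] Q(2) by simp
  ultimately show ?thesis using Q by blast
qed

lemma mapp_zero: "mapp M j 0 = 0" by (simp add: mapp_def)

locale ctx =
  fixes r :: nat and L :: "nat \<Rightarrow> int \<Rightarrow> complex"
  assumes r1: "r \<ge> 1"
    and symL: "\<And>j. j < r \<Longrightarrow> \<forall>t. L j (- t) = L j t"
    and norm1: "\<And>n. (\<forall>i\<ge>r. n i = 0) \<Longrightarrow> lnormal r L (\<lambda>i. int (n i)) (\<lambda>i. int (n i))"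
    and norm2: "\<And>n j. (\<forall>i\<ge>r. n i = 0) \<Longrightarrow> j < r \<Longrightarrow>
        lnormal r L (\<lambda>i. int ((n(j := n j + 1)) i)) (\<lambda>i. int (n i))"
begin

definition PN where "PN n = Phi r L (\<lambda>i. int (n i)) (\<lambda>i. int (n i))"
definition SN where "SN n = (\<lambda>t. PN n t + PN n (- t))"

lemma PN_is: "\<forall>i\<ge>r. n i = 0 \<Longrightarrow> is_Phi r L (\<lambda>i. int (n i)) (\<lambda>i. int (n i)) (PN n)"
  unfolding PN_def by (rule Phi_is[OF norm1])

lemma PN_lb: "\<forall>i\<ge>r. n i = 0 \<Longrightarrow> lb (- int (\<Sum>j<r. n j)) (int (\<Sum>j<r. n j)) (PN n)"
  using is_Phi_lb[OF PN_is] by (simp add: vabs_int)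

lemma PN_top: "\<forall>i\<ge>r. n i = 0 \<Longrightarrow> PN n (int (\<Sum>j<r. n j)) = 1"
  using PN_is unfolding is_Phi_def by (simp add: vabs_int)

lemma PN_orth: "\<forall>i\<ge>r. n i = 0 \<Longrightarrow> i < r \<Longrightarrow> - int (n i) \<le> k \<Longrightarrow> k \<le> int (n i) - 1 \<Longrightarrow>
   lapp L i (\<lambda>t. PN n (t + k)) = 0"
  using PN_is unfolding is_Phi_def by simp

lemma PN_gamma: assumes adm: "\<forall>i\<ge>r. n i = 0" and j: "j < r"
  shows "lapp L j (\<lambda>t. PN n (t + int (n j))) \<noteq> 0"
proof
  assume g: "lapp L j (\<lambda>t. PN n (t + int (n j))) = 0"
  define n2 where "n2 = (\<lambda>i. int ((n(j := n j + 1)) i))"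
  have n2e: "n2 = (\<lambda>i. int (n i))(j := int (n j) + 1)" unfolding n2_def by auto
  have "vabs r n2 = vabs r (\<lambda>i. int (n i)) + 1" unfolding n2e using vabs_upd[OF j, of "\<lambda>i. int (n i)" 1] by simp
  then have v2: "vabs r n2 = int (\<Sum>j<r. n j) + 1" by (simp only: vabs_int)
  have ln: "lnormal r L n2 (\<lambda>i. int (n i))" unfolding n2_def by (rule norm2[OF adm j])
  have "PN n = (\<lambda>_. 0)"
  proof (rule ker_triv[OF ln])
    show "lb (- vabs r (\<lambda>i. int (n i))) (vabs r n2 - 1) (PN n)" using PN_lb[OF adm] v2 vabs_int by simp
    show "\<forall>i<r. \<forall>k. - int (n i) \<le> k \<and> k \<le> n2 i - 1 \<longrightarrow> lapp L i (\<lambda>t. PN n (t + k)) = 0"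
    proof (intro allI impI)
      fix i k assume i: "i < r" and k: "- int (n i) \<le> k \<and> k \<le> n2 i - 1"
      show "lapp L i (\<lambda>t. PN n (t + k)) = 0"
      proof (cases "i = j \<and> k = int (n j)")
        case True then show ?thesis using g by simp
      next
        case False
        then have "k \<le> int (n i) - 1" using k unfolding n2_def by (auto split: if_splits)
        then show ?thesis using PN_orth[OF adm i] k by simp
      qed
    qed
  qed
  then show False using PN_top[OF adm] by (metis zero_neq_one)
qed

lemma SN_lb: "\<forall>i\<ge>r. n i = 0 \<Longrightarrow> lb (- int (\<Sum>j<r. n j)) (int (\<Sum>j<r. n j)) (SN n)"
  using PN_lb unfolding SN_def lb_def by (metis add.right_neutral add_0 minus_le_iff neg_le_iff_le)

lemma SN_sym: "SN n (- t) = SN n t" unfolding SN_def by simp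

lemma SN_top: "\<forall>i\<ge>r. n i = 0 \<Longrightarrow> SN n (int (\<Sum>j<r. n j)) = 1 + alpha r L (\<lambda>i. int (n i)) (\<lambda>i. int (n i))"
  unfolding SN_def alpha_def PN_def[symmetric] using PN_top by (simp add: vabs_int)

lemma SN_shift: assumes adm: "\<forall>i\<ge>r. n i = 0" and i: "i < r"
  shows "lapp L i (\<lambda>t. SN n (t + s)) = lapp L i (\<lambda>t. PN n (t + s)) + lapp L i (\<lambda>t. PN n (t + - s))"
  unfolding SN_def by (rule lapp_symz[where L=L and j=i], rule symL[OF i], rule PN_lb[OF adm])

lemma SN_orth: assumes adm: "\<forall>i\<ge>r. n i = 0" and i: "i < r" and s: "\<bar>s\<bar> \<le> int (n i) - 1"
  shows "lapp L i (\<lambda>t. SN n (t + s)) = 0"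
  unfolding SN_shift[OF adm i] using PN_orth[OF adm i, of s] PN_orth[OF adm i, of "- s"] s by simp

lemma SN_edge: assumes adm: "\<forall>i\<ge>r. n i = 0" and j: "j < r"
  shows "lapp L j (\<lambda>t. SN n (t + int (n j))) \<noteq> 0"
proof (cases "n j = 0")
  case True
  then show ?thesis unfolding SN_shift[OF adm j] using PN_gamma[OF adm j] True by simp
next
  case False
  have "lapp L j (\<lambda>t. PN n (t + - int (n j))) = 0" using PN_orth[OF adm j, of "- int (n j)"] False by simp
  then show ?thesis unfolding SN_shift[OF adm j] using PN_gamma[OF adm j] by simp
qed

lemma SN_neg: assumes adm: "\<forall>i\<ge>r. n i = 0" and j: "j < r"
  shows "lapp L j (\<lambda>t. SN n (t + - s)) = lapp L j (\<lambda>t. SN n (t + s))"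
  unfolding SN_shift[OF adm j] by simp

lemma QN: assumes adm: "\<forall>i\<ge>r. n i = 0"
  shows "\<exists>Q. degree Q \<le> (\<Sum>j<r. n j) \<and> lp Q = SN n \<and>
     coeff Q (\<Sum>j<r. n j) = 1 + alpha r L (\<lambda>i. int (n i)) (\<lambda>i. int (n i)) \<and>
     morth r (Mmom L) n Q \<and> (\<forall>j<r. mapp (Mmom L) j (Q * monom 1 (n j)) \<noteq> 0)"
proof -
  obtain Q where Q: "degree Q \<le> (\<Sum>j<r. n j)" "lp Q = SN n"
      "coeff Q (\<Sum>j<r. n j) = SN n (int (\<Sum>j<r. n j))" "morth r (Mmom L) n Q"
    using S_to_Q[where r=r and n=n and L=L, OF SN_lb[OF adm]] SN_sym SN_orth[OF adm] by blast
  have edge: "\<forall>j<r. mapp (Mmom L) j (Q * monom 1 (n j)) \<noteq> 0"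
  proof (intro allI impI)
    fix j assume j: "j < r"
    have e: "mapp (Mmom L) j (Q * monom 1 (n j)) = lapp L j ((Xop ^^ n j) (SN n))"
      by (simp add: mapp_monom Q(2))
    show "mapp (Mmom L) j (Q * monom 1 (n j)) \<noteq> 0"
    proof (cases "n j = 0")
      case True
      then show ?thesis unfolding e using SN_edge[OF adm j] by simp
    next
      case False
      have "lapp L j ((Xop ^^ n j) (SN n)) = lapp L j (\<lambda>t. SN n (t + - int (n j))) + lapp L j (\<lambda>t. SN n (t + int (n j)))"
      proof (rule lapp_Xpow_edge[OF SN_lb[OF adm]])
        show "1 \<le> n j" using False by simp
        show "\<forall>s. \<bar>s\<bar> < int (n j) \<longrightarrow> lapp L j (\<lambda>t. SN n (t + s)) = 0"
          using SN_orth[OF adm j] by auto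
      qed
      also have "\<dots> = 2 * lapp L j (\<lambda>t. SN n (t + int (n j)))" unfolding SN_neg[OF adm j] by simp
      finally show ?thesis unfolding e using SN_edge[OF adm j] by simp
    qed
  qed
  show ?thesis using Q edge SN_top[OF adm] by auto
qed

lemma sz_dec: fixes n :: "nat \<Rightarrow> nat" assumes j: "j < r" and nj: "n j \<ge> 1"
  shows "(\<Sum>i<r. (n(j := n j - 1)) i) = (\<Sum>i<r. n i) - 1"
proof -
  have a: "(\<Sum>i<r. (n(j := n j - 1)) i) = (n j - 1) + (\<Sum>i\<in>{..<r} - {j}. n i)"
    using j by (simp add: sum.remove)
  have b: "(\<Sum>i<r. n i) = n j + (\<Sum>i\<in>{..<r} - {j}. n i)"
    using j by (simp add: sum.remove)
  have g: "\<And>x y::nat. x \<ge> 1 \<Longrightarrow> x - 1 + y = x + y - 1" by simp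
  show ?thesis unfolding a b using nj by simp
qed

lemma hnormal_aux: "\<forall>n D. (\<forall>i\<ge>r. n i = 0) \<longrightarrow> (\<Sum>j<r. n j) = s \<longrightarrow> morth r (Mmom L) n D \<longrightarrow> degree D < s \<longrightarrow> D = 0"
proof (induction s)
  case 0 then show ?case by simp
next
  case (Suc s)
  show ?case
  proof (intro allI impI)
    fix n D assume adm: "\<forall>i\<ge>r. n i = 0" and sz: "(\<Sum>j<r. n j) = Suc s"
      and mo: "morth r (Mmom L) n D" and dg: "degree D < Suc s"
    obtain j where j: "j < r" "n j \<ge> 1"
    proof (rule ccontr)
      assume "\<not> thesis"
      then have "\<forall>j<r. n j = 0" using that by force
      then show False using sz by simp
    qed
    define n' where "n' = n(j := n j - 1)"
    have adm': "\<forall>i\<ge>r. n' i = 0" using adm j unfolding n'_def by auto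
    have sz': "(\<Sum>i<r. n' i) = s" unfolding n'_def using sz_dec[where n=n, OF j] sz by simp
    have mo': "morth r (Mmom L) n' D" using mo unfolding morth_def n'_def by auto
    have IH: "\<And>E. morth r (Mmom L) n' E \<Longrightarrow> degree E < s \<Longrightarrow> E = 0" using Suc.IH adm' sz' by blast
    show "D = 0"
    proof (rule ccontr)
      assume D0: "D \<noteq> 0"
      have ds: "degree D = s"
      proof (rule ccontr)
        assume "degree D \<noteq> s"
        then have "degree D < s" using dg by simp
        then show False using IH[OF mo'] D0 by simp
      qed
      obtain Q where Q: "degree Q \<le> s" "coeff Q s = 1 + alpha r L (\<lambda>i. int (n' i)) (\<lambda>i. int (n' i))"
        "morth r (Mmom L) n' Q" "\<forall>j<r. mapp (Mmom L) j (Q * monom 1 (n' j)) \<noteq> 0"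
        using QN[OF adm'] sz' by metis
      define a where "a = 1 + alpha r L (\<lambda>i. int (n' i)) (\<lambda>i. int (n' i))"
      have edge: "mapp (Mmom L) j (Q * monom 1 (n' j)) \<noteq> 0" using Q(4) j by blast
      show False
      proof (cases "a = 0")
        case True
        then have "Q = 0 \<or> degree Q < s" using coeff_top_zero[OF Q(1)] Q(2) a_def by simp
        then have "Q = 0" using IH[OF Q(3)] by blast
        then show False using edge by (simp add: mapp_zero)
      next
        case False
        define E where "E = smult a D - smult (lead_coeff D) Q"
        have dE: "degree E \<le> s" unfolding E_def using Q(1) ds
          by (meson degree_diff_le degree_smult_le le_trans)
        have cE: "coeff E s = 0" unfolding E_def using Q(2) ds a_def by simp
        have moE: "morth r (Mmom L) n' E" unfolding E_def by (rule morth_lin[OF mo' Q(3)])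
        have E0: "E = 0" using coeff_top_zero[OF dE cE] IH[OF moE] by blast
        have "E * monom 1 (n' j) = smult a (D * monom 1 (n' j)) - smult (lead_coeff D) (Q * monom 1 (n' j))"
          unfolding E_def by (simp add: algebra_simps)
        then have "mapp (Mmom L) j (E * monom 1 (n' j)) = a * mapp (Mmom L) j (D * monom 1 (n' j)) - lead_coeff D * mapp (Mmom L) j (Q * monom 1 (n' j))"
          by (simp only: mapp_lin)
        moreover have "mapp (Mmom L) j (E * monom 1 (n' j)) = 0" using E0 by (simp add: mapp_zero)
        ultimately have "0 = a * mapp (Mmom L) j (D * monom 1 (n' j)) - lead_coeff D * mapp (Mmom L) j (Q * monom 1 (n' j))"
          by simp
        moreover have "mapp (Mmom L) j (D * monom 1 (n' j)) = 0"
          using mo j unfolding morth_def n'_def by simp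
        ultimately have "lead_coeff D * mapp (Mmom L) j (Q * monom 1 (n' j)) = 0" by simp
        then show False using edge D0 by simp
      qed
    qed
  qed
qed

lemma hnormal: "\<forall>i\<ge>r. n i = 0 \<Longrightarrow> morth r (Mmom L) n D \<Longrightarrow> degree D < (\<Sum>j<r. n j) \<Longrightarrow> D = 0"
  using hnormal_aux by blast


lemma mop_unique: assumes adm: "\<forall>i\<ge>r. n i = 0"
  and p1: "is_mop r (Mmom L) n P1" and p2: "is_mop r (Mmom L) n P2"
  shows "P1 = P2"
proof -
  define E where "E = smult 1 P1 - smult 1 P2"
  have m1: "morth r (Mmom L) n P1" using p1 unfolding is_mop_def morth_def by blast
  have m2: "morth r (Mmom L) n P2" using p2 unfolding is_mop_def morth_def by blast
  have mE: "morth r (Mmom L) n E" unfolding E_def by (rule morth_lin[OF m1 m2])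
  have d1: "degree P1 = (\<Sum>j<r. n j)" and l1: "lead_coeff P1 = 1" using p1 unfolding is_mop_def by auto
  have d2: "degree P2 = (\<Sum>j<r. n j)" and l2: "lead_coeff P2 = 1" using p2 unfolding is_mop_def by auto
  have dE: "degree E \<le> (\<Sum>j<r. n j)" unfolding E_def using d1 d2
    by (metis degree_diff_le le_refl smult_1_left)
  have cE: "coeff E (\<Sum>j<r. n j) = 0" unfolding E_def using d1 d2 l1 l2 by simp
  have "E = 0" using coeff_top_zero[OF dE cE] hnormal[OF adm mE] by blast
  then show ?thesis unfolding E_def by simp
qed

lemma alpha_ne: assumes adm: "\<forall>i\<ge>r. n i = 0"
  shows "alpha r L (\<lambda>i. int (n i)) (\<lambda>i. int (n i)) \<noteq> -1"
proof
  assume a: "alpha r L (\<lambda>i. int (n i)) (\<lambda>i. int (n i)) = -1"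
  obtain Q where Q: "degree Q \<le> (\<Sum>j<r. n j)" "coeff Q (\<Sum>j<r. n j) = 1 + alpha r L (\<lambda>i. int (n i)) (\<lambda>i. int (n i))"
      "morth r (Mmom L) n Q" "\<forall>j<r. mapp (Mmom L) j (Q * monom 1 (n j)) \<noteq> 0"
    using QN[OF adm] by blast
  have "Q = 0 \<or> degree Q < (\<Sum>j<r. n j)" using coeff_top_zero[OF Q(1)] Q(2) a by simp
  then have "Q = 0" using hnormal[OF adm Q(3)] by blast
  moreover have "(0::nat) < r" using r1 by simp
  ultimately show False using Q(4) by (metis mapp_zero mult_zero_left)
qed

lemma mop_main: assumes adm: "\<forall>i\<ge>r. n i = 0"
  shows "mnormal r (Mmom L) n \<and> (\<forall>z. z \<noteq> 0 \<longrightarrow> poly (mop r (Mmom L) n) (z + 1 / z) =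
     1 / (1 + alpha r L (\<lambda>i. int (n i)) (\<lambda>i. int (n i))) * (leval (PN n) z + leval (PN n) (1 / z)))"
proof -
  define a where "a = 1 + alpha r L (\<lambda>i. int (n i)) (\<lambda>i. int (n i))"
  have a0: "a \<noteq> 0" unfolding a_def using alpha_ne[OF adm] by (metis add_eq_0_iff)
  obtain Q where Q: "degree Q \<le> (\<Sum>j<r. n j)" "lp Q = SN n" "coeff Q (\<Sum>j<r. n j) = a"
      "morth r (Mmom L) n Q"
    using QN[OF adm] unfolding a_def by blast
  have dQ: "degree Q = (\<Sum>j<r. n j)" using Q(1) le_degree[of Q "\<Sum>j<r. n j"] Q(3) a0 by simp
  define P where "P = smult (1 / a) Q"
  have mP: "is_mop r (Mmom L) n P"
    unfolding is_mop_def
  proof (intro conjI)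
    show "degree P = (\<Sum>j<r. n j)" unfolding P_def using dQ a0 by simp
    show "lead_coeff P = 1" unfolding P_def using dQ a0 Q(3) by simp
    have "morth r (Mmom L) n (smult (1 / a) Q - smult 0 Q)" by (rule morth_lin[OF Q(4) Q(4)])
    then show "\<forall>j<r. \<forall>k<n j. mapp (Mmom L) j (P * monom 1 k) = 0" unfolding P_def morth_def by simp
  qed
  have mn: "mnormal r (Mmom L) n" unfolding mnormal_def using mP mop_unique[OF adm] by blast
  have mo: "mop r (Mmom L) n = P" unfolding mop_def using mP mop_unique[OF adm] by blast
  show ?thesis
  proof (intro conjI allI impI)
    show "mnormal r (Mmom L) n" by (rule mn)
    fix z :: complex assume z: "z \<noteq> 0"
    have "poly (mop r (Mmom L) n) (z + 1 / z) = 1 / a * poly Q (z + 1 / z)" unfolding mo P_def by simp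
    also have "poly Q (z + 1 / z) = leval (SN n) z" using leval_lp[OF z, of Q] Q(2) by simp
    also have "\<dots> = leval (PN n) z + leval (PN n) (1 / z)" unfolding SN_def by (rule leval_sym[OF PN_lb[OF adm] z])
    finally show "poly (mop r (Mmom L) n) (z + 1 / z) = 1 / (1 + alpha r L (\<lambda>i. int (n i)) (\<lambda>i. int (n i))) * (leval (PN n) z + leval (PN n) (1 / z))"
      unfolding a_def .
  qed
qed

lemma second: assumes adm: "\<forall>i\<ge>r. n i = 0" and j: "j < r" and nj: "n j \<ge> 1" and z: "z \<noteq> 0"
  shows "poly (mop r (Mmom L) n) (z + 1 / z) =
    leval (Phi r L (\<lambda>i. int (n i)) ((\<lambda>i. int (n i))(j := int (n j) - 1))) z +
    leval (Phi r L (\<lambda>i. int (n i)) ((\<lambda>i. int (n i))(j := int (n j) - 1))) (1 / z)"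
proof -
  define n' where "n' = n(j := n j - 1)"
  define m where "m = (\<lambda>i. int (n i))(j := int (n j) - 1)"
  define Psi where "Psi = Phi r L (\<lambda>i. int (n i)) m"
  define B where "B = int (\<Sum>j<r. n j)"
  have adm': "\<forall>i\<ge>r. n' i = 0" using adm j unfolding n'_def by auto
  have e1: "(\<lambda>i. int ((n'(j := n' j + 1)) i)) = (\<lambda>i. int (n i))" unfolding n'_def using nj by auto
  have e2: "(\<lambda>i. int (n' i)) = m" unfolding n'_def m_def using nj by (auto simp: of_nat_diff)
  have ln: "lnormal r L (\<lambda>i. int (n i)) m" using norm2[OF adm' j] unfolding e1 e2 .
  have P: "is_Phi r L (\<lambda>i. int (n i)) m Psi" unfolding Psi_def by (rule Phi_is[OF ln])
  have vm: "vabs r m = B - 1"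
  proof -
    have "vabs r m = vabs r ((\<lambda>i. int (n i))(j := (\<lambda>i. int (n i)) j + (- 1)))" unfolding m_def by simp
    also have "\<dots> = vabs r (\<lambda>i. int (n i)) + (- 1)" by (rule vabs_upd[OF j])
    finally have "vabs r m = vabs r (\<lambda>i. int (n i)) + (- 1)" .
    then show ?thesis unfolding B_def vabs_int by simp
  qed
  have vn: "vabs r (\<lambda>i. int (n i)) = B" unfolding B_def vabs_int ..
  have Plb0: "lb (- (B - 1)) B Psi" using is_Phi_lb[OF P] unfolding vm vn .
  have Plb: "lb (- B) B Psi" using Plb0 by (rule lb_mono) auto
  have Ptop: "Psi B = 1" using P unfolding is_Phi_def vn by simp
  have Pbot: "Psi (- B) = 0" using Plb0 unfolding lb_def by force
  have Porth: "\<forall>i<r. \<forall>k. - m i \<le> k \<and> k \<le> int (n i) - 1 \<longrightarrow> lapp L i (\<lambda>t. Psi (t + k)) = 0"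
    using P unfolding is_Phi_def by simp
  define S2 where "S2 = (\<lambda>t. Psi t + Psi (- t))"
  have Slb: "lb (- int (\<Sum>j<r. n j)) (int (\<Sum>j<r. n j)) S2"
    using Plb unfolding S2_def lb_def B_def by (metis add.right_neutral add_0 minus_le_iff neg_le_iff_le)
  have Ssym: "\<forall>t. S2 (- t) = S2 t" unfolding S2_def by simp
  have Sorth: "\<forall>i<r. \<forall>s. \<bar>s\<bar> \<le> int (n i) - 1 \<longrightarrow> lapp L i (\<lambda>t. S2 (t + s)) = 0"
  proof (intro allI impI)
    fix i s assume i: "i < r" and s: "\<bar>s\<bar> \<le> int (n i) - 1"
    have mi: "m i \<ge> int (n i) - 1" unfolding m_def by simp
    have "lapp L i (\<lambda>t. S2 (t + s)) = lapp L i (\<lambda>t. Psi (t + s)) + lapp L i (\<lambda>t. Psi (t + - s))"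
      unfolding S2_def by (rule lapp_symz[where L=L and j=i], rule symL[OF i], rule Plb)
    also have "\<dots> = 0"
    proof -
      have c1: "- m i \<le> s \<and> s \<le> int (n i) - 1" using s mi by arith
      have c2: "- m i \<le> - s \<and> - s \<le> int (n i) - 1" using s mi by arith
      have "lapp L i (\<lambda>t. Psi (t + s)) = 0" using Porth i c1 by blast
      moreover have "lapp L i (\<lambda>t. Psi (t + - s)) = 0" using Porth i c2 by blast
      ultimately show ?thesis by simp
    qed
    finally show "lapp L i (\<lambda>t. S2 (t + s)) = 0" .
  qed
  obtain Q where Q: "degree Q \<le> (\<Sum>j<r. n j)" "lp Q = S2" "coeff Q (\<Sum>j<r. n j) = S2 (int (\<Sum>j<r. n j))"
      "morth r (Mmom L) n Q"
    using S_to_Q[where r=r and n=n and L=L, OF Slb Ssym Sorth] by blast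
  have c1: "coeff Q (\<Sum>j<r. n j) = 1" using Q(3) Ptop Pbot unfolding S2_def B_def by simp
  have dQ: "degree Q = (\<Sum>j<r. n j)" using Q(1) le_degree[of Q "\<Sum>j<r. n j"] c1 by simp
  have mQ: "is_mop r (Mmom L) n Q" unfolding is_mop_def using dQ c1 Q(4) unfolding morth_def by simp
  have mo: "mop r (Mmom L) n = Q" unfolding mop_def using mQ mop_unique[OF adm] by blast
  have "poly (mop r (Mmom L) n) (z + 1 / z) = leval S2 z" unfolding mo using leval_lp[OF z, of Q] Q(2) by simp
  also have "\<dots> = leval Psi z + leval Psi (1 / z)" unfolding S2_def by (rule leval_sym[OF Plb z])
  finally show ?thesis unfolding Psi_def m_def .
qed

end

theorem theorem10p2:
  fixes r :: nat and L :: "nat \<Rightarrow> int \<Rightarrow> complex"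
  assumes "r \<ge> 1"
    and sym: "\<forall>j<r. \<forall>k::nat. L j (int k) = L j (- int k)"
    and norm: "\<forall>n::nat \<Rightarrow> nat. (\<forall>j\<ge>r. n j = 0) \<longrightarrow>
        lnormal r L (\<lambda>i. int (n i)) (\<lambda>i. int (n i)) \<and>
        (\<forall>j<r. lnormal r L (\<lambda>i. int ((n(j := n j + 1)) i)) (\<lambda>i. int (n i)))"
  shows "perfect r (Mmom L) \<and>
    (\<forall>n::nat \<Rightarrow> nat. (\<forall>j\<ge>r. n j = 0) \<longrightarrow>
       (let nn = (\<lambda>i. int (n i)) in
        alpha r L nn nn \<noteq> -1 \<and>
        (\<forall>z::complex. z \<noteq> 0 \<longrightarrow>
           poly (mop r (Mmom L) n) (z + 1 / z) =
             1 / (1 + alpha r L nn nn) * (leval (Phi r L nn nn) z + leval (Phi r L nn nn) (1 / z))) \<and>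
        (\<forall>j<r. n j \<ge> 1 \<longrightarrow> (\<forall>z::complex. z \<noteq> 0 \<longrightarrow>
           poly (mop r (Mmom L) n) (z + 1 / z) =
             leval (Phi r L nn (nn(j := nn j - 1))) z + leval (Phi r L nn (nn(j := nn j - 1))) (1 / z)))))"
proof -
  interpret ctx r L
  proof
    show "r \<ge> 1" by (rule assms(1))
  next
    fix j assume j: "j < r"
    show "\<forall>t. L j (- t) = L j t"
    proof
      fix t :: int
      show "L j (- t) = L j t"
      proof (cases "t \<ge> 0")
        case True
        then obtain k where "t = int k" by (metis nonneg_eq_int)
        then show ?thesis using sym j by simp
      next
        case False
        then obtain k where "t = - int k" by (metis neg_int_cases linorder_not_le order_less_imp_le nonneg_int_cases minus_minus neg_0_le_iff_le)
        then show ?thesis using sym j by simp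
      qed
    qed
  next
    fix n :: "nat \<Rightarrow> nat" assume "\<forall>i\<ge>r. n i = 0"
    then show "lnormal r L (\<lambda>i. int (n i)) (\<lambda>i. int (n i))" using norm by blast
  next
    fix n :: "nat \<Rightarrow> nat" and j assume "\<forall>i\<ge>r. n i = 0" "j < r"
    then show "lnormal r L (\<lambda>i. int ((n(j := n j + 1)) i)) (\<lambda>i. int (n i))" using norm by blast
  qed
  show ?thesis
  proof (intro conjI allI impI)
    show "perfect r (Mmom L)" unfolding perfect_def using mop_main by blast
  next
    fix n :: "nat \<Rightarrow> nat" assume adm: "\<forall>j\<ge>r. n j = 0"
    show "let nn = (\<lambda>i. int (n i)) in
        alpha r L nn nn \<noteq> -1 \<and>
        (\<forall>z::complex. z \<noteq> 0 \<longrightarrow>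
           poly (mop r (Mmom L) n) (z + 1 / z) =
             1 / (1 + alpha r L nn nn) * (leval (Phi r L nn nn) z + leval (Phi r L nn nn) (1 / z))) \<and>
        (\<forall>j<r. n j \<ge> 1 \<longrightarrow> (\<forall>z::complex. z \<noteq> 0 \<longrightarrow>
           poly (mop r (Mmom L) n) (z + 1 / z) =
             leval (Phi r L nn (nn(j := nn j - 1))) z + leval (Phi r L nn (nn(j := nn j - 1))) (1 / z)))"
      unfolding Let_def
    proof (intro conjI allI impI)
      show "alpha r L (\<lambda>i. int (n i)) (\<lambda>i. int (n i)) \<noteq> - 1" by (rule alpha_ne[OF adm])
    next
      fix z :: complex assume "z \<noteq> 0"
      then show "poly (mop r (Mmom L) n) (z + 1 / z) =
             1 / (1 + alpha r L (\<lambda>i. int (n i)) (\<lambda>i. int (n i))) *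
             (leval (Phi r L (\<lambda>i. int (n i)) (\<lambda>i. int (n i))) z + leval (Phi r L (\<lambda>i. int (n i)) (\<lambda>i. int (n i))) (1 / z))"
        using mop_main[OF adm] unfolding PN_def by blast
    next
      fix j z assume j: "j < r" and nj: "1 \<le> n j" and z: "(z::complex) \<noteq> 0"
      show "poly (mop r (Mmom L) n) (z + 1 / z) =
         leval (Phi r L (\<lambda>i. int (n i)) ((\<lambda>i. int (n i))(j := int (n j) - 1))) z +
         leval (Phi r L (\<lambda>i. int (n i)) ((\<lambda>i. int (n i))(j := int (n j) - 1))) (1 / z)"
        by (rule second[OF adm j nj z])
    qed
  qed
qed

end
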